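(* Let $n\ge 2$ and let $H$ be a graph with vertex set $[n]$. If $H$ is Henneberg, then there exists a pair of rooted binary trees $T_1,T_2$ on leaf set $[n]$ such that the restricted clade graph $G^H_{T_1,T_2}$ is a tree.
   Context: A graph is Henneberg if it is the complete graph $K_2$, or it can be obtained from a smaller Henneberg graph by one of the Henneberg moves: (i) adding a new vertex adjacent to two existing vertices; (ii) removing an existing edge $ij$ and adding a new vertex adjacent to $i$, $j$ and one other existing vertex (graphs are considered up to relabeling of vertices). A rooted binary tree on leaf set $[n]$ has leaves labeled bijectively by $[n]$ and each internal vertex has exactly two children. A clade is the set of leaves below an internal vertex; $\mathrm{clade}(T)$ is the set of clades (including $[n]$); $c_T(S)$ is the smallest clade of $T$ containing $S\subseteq[n]$. The restricted clade graph $G^H_{T_1,T_2}$ is the bipartite multigraph with vertex set the disjoint union of $\mathrm{clade}(T_1)$ and $\mathrm{clade}(T_2)$, having for each edge $ij$ of $H$ an edge $e_{ij}$ joining $c_{T_1}(\{i,j\})$ to $c_{T_2}(\{i,j\})$. *)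

theory Defs
  imports Main
begin

definition simple_graph :: "'a set \<Rightarrow> 'a set set \<Rightarrow> bool" where
  "simple_graph V E \<longleftrightarrow> (\<forall>e\<in>E. \<exists>i j. e = {i, j} \<and> i \<noteq> j \<and> i \<in> V \<and> j \<in> V)"

text \<open>Henneberg graphs. Vertex labels are arbitrary, new vertices are fresh labels,
  so the class is closed under relabeling (graphs up to relabeling).\<close>

inductive henneberg :: "'a set \<Rightarrow> 'a set set \<Rightarrow> bool" where
  K2: "a \<noteq> b \<Longrightarrow> henneberg {a, b} {{a, b}}"
| move1: "\<lbrakk>henneberg V E; v \<notin> V; i \<in> V; j \<in> V; i \<noteq> j\<rbrakk>
          \<Longrightarrow> henneberg (insert v V) (E \<union> {{v, i}, {v, j}})"
| move2: "\<lbrakk>henneberg V E; v \<notin> V; {i, j} \<in> E; i \<noteq> j; k \<in> V; k \<noteq> i; k \<noteq> j\<rbrakk>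
          \<Longrightarrow> henneberg (insert v V) ((E - {{i, j}}) \<union> {{v, i}, {v, j}, {v, k}})"

datatype btree = Leaf nat | Node btree btree

fun leaf_list :: "btree \<Rightarrow> nat list" where
  "leaf_list (Leaf i) = [i]"
| "leaf_list (Node l r) = leaf_list l @ leaf_list r"

definition leaves :: "btree \<Rightarrow> nat set" where
  "leaves t = set (leaf_list t)"

definition binary_tree_on :: "nat set \<Rightarrow> btree \<Rightarrow> bool" where
  "binary_tree_on L t \<longleftrightarrow> distinct (leaf_list t) \<and> set (leaf_list t) = L"

fun clades :: "btree \<Rightarrow> nat set set" where
  "clades (Leaf i) = {}"
| "clades (Node l r) = insert (leaves (Node l r)) (clades l \<union> clades r)"

definition cT :: "btree \<Rightarrow> nat set \<Rightarrow> nat set" where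
  "cT T S = (THE C. C \<in> clades T \<and> S \<subseteq> C \<and> (\<forall>C'\<in>clades T. S \<subseteq> C' \<longrightarrow> C \<subseteq> C'))"

text \<open>A multigraph: vertex set V, edge index set I, and endpoints of each edge.\<close>

definition mg_connected :: "'v set \<Rightarrow> 'e set \<Rightarrow> ('e \<Rightarrow> 'v \<times> 'v) \<Rightarrow> bool" where
  "mg_connected V I ends \<longleftrightarrow>
     (\<forall>u\<in>V. \<forall>w\<in>V. (\<lambda>x y. \<exists>e\<in>I. ends e = (x, y) \<or> ends e = (y, x))\<^sup>*\<^sup>* u w)"

text \<open>A cycle: distinct edges e_0..e_(k-1) and distinct vertices v_0..v_(k-1), k \<ge> 1,
  with e_m joining v_m and v_(m+1 mod k). (Two parallel edges form a cycle of length 2.)\<close>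
definition mg_has_cycle :: "'v set \<Rightarrow> 'e set \<Rightarrow> ('e \<Rightarrow> 'v \<times> 'v) \<Rightarrow> bool" where
  "mg_has_cycle V I ends \<longleftrightarrow>
     (\<exists>es vs. es \<noteq> [] \<and> length vs = length es \<and> distinct es \<and> distinct vs \<and>
        set es \<subseteq> I \<and> set vs \<subseteq> V \<and>
        (\<forall>m<length es. ends (es ! m) = (vs ! m, vs ! ((m + 1) mod length es)) \<or>
                        ends (es ! m) = (vs ! ((m + 1) mod length es), vs ! m)))"

definition mg_is_tree :: "'v set \<Rightarrow> 'e set \<Rightarrow> ('e \<Rightarrow> 'v \<times> 'v) \<Rightarrow> bool" where
  "mg_is_tree V I ends \<longleftrightarrow>
     V \<noteq> {} \<and> finite V \<and> finite I \<and> (\<forall>e\<in>I. fst (ends e) \<in> V \<and> snd (ends e) \<in> V) \<and>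
     mg_connected V I ends \<and> \<not> mg_has_cycle V I ends"

text \<open>Vertices: disjoint union of clade(T1) and clade(T2); one edge e_ij for each edge {i,j} of H,
  joining c_T1({i,j}) to c_T2({i,j}).\<close>

definition rcg_vertices :: "btree \<Rightarrow> btree \<Rightarrow> (nat set + nat set) set" where
  "rcg_vertices T1 T2 = Inl ` clades T1 \<union> Inr ` clades T2"

definition rcg_ends :: "btree \<Rightarrow> btree \<Rightarrow> nat set \<Rightarrow> (nat set + nat set) \<times> (nat set + nat set)" where
  "rcg_ends T1 T2 e = (Inl (cT T1 e), Inr (cT T2 e))"

definition restricted_clade_graph_is_tree :: "nat set set \<Rightarrow> btree \<Rightarrow> btree \<Rightarrow> bool" where
  "restricted_clade_graph_is_tree E T1 T2 \<longleftrightarrow> mg_is_tree (rcg_vertices T1 T2) E (rcg_ends T1 T2)"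

end

theory Submission
  imports Defs
begin


definition adj :: "'e set \<Rightarrow> ('e \<Rightarrow> 'v \<times> 'v) \<Rightarrow> 'v \<Rightarrow> 'v \<Rightarrow> bool" where
  "adj I ends = (\<lambda>x y. \<exists>e\<in>I. ends e = (x, y) \<or> ends e = (y, x))"

lemma conn_adj: "mg_connected V I ends \<longleftrightarrow> (\<forall>u\<in>V. \<forall>w\<in>V. (adj I ends)\<^sup>*\<^sup>* u w)"
  unfolding mg_connected_def adj_def by simp

lemma reach_sym: "(adj I ends)\<^sup>*\<^sup>* x y \<Longrightarrow> (adj I ends)\<^sup>*\<^sup>* y x"
proof (induction rule: rtranclp_induct)
  case base then show ?case by simp
next
  case (step y z)
  have "adj I ends z y" using step(2) unfolding adj_def by blast
  then show ?case using step(3) by (rule converse_rtranclp_into_rtranclp)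
qed

lemma reach_mono: assumes "I \<subseteq> I'" "(adj I ends)\<^sup>*\<^sup>* x y" shows "(adj I' ends)\<^sup>*\<^sup>* x y"
  using assms(2)
proof (induction rule: rtranclp_induct)
  case base then show ?case by simp
next
  case (step y z)
  have "adj I' ends y z" using step(2) assms(1) unfolding adj_def by blast
  with step(3) show ?case by (rule rtranclp.rtrancl_into_rtrancl)
qed

lemma reach_step: "e \<in> I \<Longrightarrow> ends e = (x, y) \<or> ends e = (y, x) \<Longrightarrow> (adj I ends)\<^sup>*\<^sup>* x y"
  unfolding adj_def by (rule r_into_rtranclp) blast

lemma reach_empty: "(adj {} ends)\<^sup>*\<^sup>* x y \<Longrightarrow> x = y"
  by (induction rule: rtranclp_induct) (auto simp: adj_def)

lemma reach_decomp:
  assumes "(adj (insert e I) ends)\<^sup>*\<^sup>* a b" "ends e = (x, y)"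
  shows "(adj I ends)\<^sup>*\<^sup>* a b \<or> ((adj I ends)\<^sup>*\<^sup>* a x \<and> (adj I ends)\<^sup>*\<^sup>* y b)
     \<or> ((adj I ends)\<^sup>*\<^sup>* a y \<and> (adj I ends)\<^sup>*\<^sup>* x b)"
  using assms(1)
proof (induction rule: rtranclp_induct)
  case base then show ?case by simp
next
  case (step b c)
  show ?case
  proof (cases "adj I ends b c")
    case True
    then show ?thesis using step(3) by (meson rtranclp.rtrancl_into_rtrancl)
  next
    case False
    then have "ends e = (b, c) \<or> ends e = (c, b)" using step(2) unfolding adj_def by auto
    then have bc: "(b = x \<and> c = y) \<or> (b = y \<and> c = x)" using assms(2) by auto
    show ?thesis using step(3) bc by auto
  qed
qed

lemma reach_trans: "(adj I ends)\<^sup>*\<^sup>* x y \<Longrightarrow> (adj I ends)\<^sup>*\<^sup>* y z \<Longrightarrow> (adj I ends)\<^sup>*\<^sup>* x z"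
  by (rule rtranclp_trans)

lemma comp_lemma:
  assumes "finite I"
  shows "finite V \<Longrightarrow> (\<forall>e\<in>I. fst (ends e) \<in> V \<and> snd (ends e) \<in> V) \<Longrightarrow>
     \<exists>R\<subseteq>V. (\<forall>x\<in>V. \<exists>r\<in>R. (adj I ends)\<^sup>*\<^sup>* x r) \<and>
       (\<forall>r1\<in>R. \<forall>r2\<in>R. (adj I ends)\<^sup>*\<^sup>* r1 r2 \<longrightarrow> r1 = r2) \<and> card V \<le> card I + card R"
  using assms
proof (induction I rule: finite_induct)
  case empty
  have "\<forall>r1\<in>V. \<forall>r2\<in>V. (adj {} ends)\<^sup>*\<^sup>* r1 r2 \<longrightarrow> r1 = r2" using reach_empty by metis
  moreover have "\<forall>x\<in>V. \<exists>r\<in>V. (adj {} ends)\<^sup>*\<^sup>* x r" by blast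
  ultimately show ?case by (intro exI[of _ V]) simp
next
  case (insert e I)
  obtain x y where xy: "ends e = (x, y)" by (cases "ends e") auto
  have xV: "x \<in> V" and yV: "y \<in> V" using insert.prems(2) xy by force+
  have "\<forall>e\<in>I. fst (ends e) \<in> V \<and> snd (ends e) \<in> V" using insert.prems(2) by simp
  from insert.IH[OF insert.prems(1) this] obtain R where
    RV: "R \<subseteq> V" and Rc: "\<forall>x\<in>V. \<exists>r\<in>R. (adj I ends)\<^sup>*\<^sup>* x r"
    and Rd: "\<forall>r1\<in>R. \<forall>r2\<in>R. (adj I ends)\<^sup>*\<^sup>* r1 r2 \<longrightarrow> r1 = r2"
    and Rcard: "card V \<le> card I + card R" by (elim exE conjE)
  obtain rx where rx: "rx \<in> R" "(adj I ends)\<^sup>*\<^sup>* x rx" using Rc xV by blast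
  obtain ry where ry: "ry \<in> R" "(adj I ends)\<^sup>*\<^sup>* y ry" using Rc yV by blast
  have sub: "I \<subseteq> insert e I" by auto
  have exy: "(adj (insert e I) ends)\<^sup>*\<^sup>* x y" by (rule reach_step[of e]) (simp_all add: xy)
  have Rd': "\<And>r1 r2. r1 \<in> R \<Longrightarrow> r2 \<in> R \<Longrightarrow> (adj I ends)\<^sup>*\<^sup>* r1 r2 \<Longrightarrow> r1 = r2"
    using Rd by (meson)
  have finR: "finite R" using RV insert.prems(1) finite_subset by blast
  show ?case
  proof (cases "rx = ry")
    case True
    show ?thesis
    proof (intro exI[of _ R] conjI)
      show "R \<subseteq> V" by fact
      show "\<forall>x\<in>V. \<exists>r\<in>R. (adj (insert e I) ends)\<^sup>*\<^sup>* x r"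
      proof
        fix z assume "z \<in> V"
        then obtain r where r: "r \<in> R" "(adj I ends)\<^sup>*\<^sup>* z r" using Rc by blast
        show "\<exists>r\<in>R. (adj (insert e I) ends)\<^sup>*\<^sup>* z r" using r(1) reach_mono[OF sub r(2)] by blast
      qed
      show "card V \<le> card (insert e I) + card R" using Rcard insert.hyps by simp
      show "\<forall>r1\<in>R. \<forall>r2\<in>R. (adj (insert e I) ends)\<^sup>*\<^sup>* r1 r2 \<longrightarrow> r1 = r2"
      proof (intro ballI impI)
        fix r1 r2 assume r: "r1 \<in> R" "r2 \<in> R" "(adj (insert e I) ends)\<^sup>*\<^sup>* r1 r2"
        from reach_decomp[OF r(3) xy] show "r1 = r2"
        proof (elim disjE conjE)
          assume "(adj I ends)\<^sup>*\<^sup>* r1 r2" then show ?thesis by (rule Rd'[OF r(1,2)])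
        next
          assume a: "(adj I ends)\<^sup>*\<^sup>* r1 x" "(adj I ends)\<^sup>*\<^sup>* y r2"
          have "r1 = rx" by (rule Rd'[OF r(1) rx(1) reach_trans[OF a(1) rx(2)]])
          moreover have "r2 = ry" by (rule Rd'[OF r(2) ry(1) reach_trans[OF reach_sym[OF a(2)] ry(2)]])
          ultimately show ?thesis using True by simp
        next
          assume a: "(adj I ends)\<^sup>*\<^sup>* r1 y" "(adj I ends)\<^sup>*\<^sup>* x r2"
          have "r1 = ry" by (rule Rd'[OF r(1) ry(1) reach_trans[OF a(1) ry(2)]])
          moreover have "r2 = rx" by (rule Rd'[OF r(2) rx(1) reach_trans[OF reach_sym[OF a(2)] rx(2)]])
          ultimately show ?thesis using True by simp
        qed
      qed
    qed
  next
    case False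
    show ?thesis
    proof (intro exI[of _ "R - {ry}"] conjI)
      show "R - {ry} \<subseteq> V" using RV by blast
      show "card V \<le> card (insert e I) + card (R - {ry})"
      proof -
        have "card R \<ge> 1" using finR ry(1) by (metis One_nat_def Suc_leI card_gt_0_iff empty_iff)
        then show ?thesis using Rcard insert.hyps finR ry(1) by (simp add: card_Diff_singleton)
      qed
      show "\<forall>z\<in>V. \<exists>r\<in>R - {ry}. (adj (insert e I) ends)\<^sup>*\<^sup>* z r"
      proof
        fix z assume "z \<in> V"
        then obtain r where r: "r \<in> R" "(adj I ends)\<^sup>*\<^sup>* z r" using Rc by blast
        show "\<exists>r\<in>R - {ry}. (adj (insert e I) ends)\<^sup>*\<^sup>* z r"
        proof (cases "r = ry")
          case False then show ?thesis using r(1) reach_mono[OF sub r(2)] by blast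
        next
          case True
          have zy: "(adj (insert e I) ends)\<^sup>*\<^sup>* z y"
            using reach_trans[OF reach_mono[OF sub r(2)[unfolded True]] reach_mono[OF sub reach_sym[OF ry(2)]]] True by simp
          have "(adj (insert e I) ends)\<^sup>*\<^sup>* z x" using reach_trans[OF zy reach_sym[OF exy]] .
          then have "(adj (insert e I) ends)\<^sup>*\<^sup>* z rx" using reach_trans[OF _ reach_mono[OF sub rx(2)]] by blast
          then show ?thesis using rx(1) False by blast
        qed
      qed
      show "\<forall>r1\<in>R - {ry}. \<forall>r2\<in>R - {ry}. (adj (insert e I) ends)\<^sup>*\<^sup>* r1 r2 \<longrightarrow> r1 = r2"
      proof (intro ballI impI)
        fix r1 r2 assume r: "r1 \<in> R - {ry}" "r2 \<in> R - {ry}" "(adj (insert e I) ends)\<^sup>*\<^sup>* r1 r2"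
        from reach_decomp[OF r(3) xy] show "r1 = r2"
        proof (elim disjE conjE)
          assume "(adj I ends)\<^sup>*\<^sup>* r1 r2" then show ?thesis by (rule Rd'[OF DiffD1[OF r(1)] DiffD1[OF r(2)]])
        next
          assume a: "(adj I ends)\<^sup>*\<^sup>* r1 x" "(adj I ends)\<^sup>*\<^sup>* y r2"
          have "r2 = ry" by (rule Rd'[OF DiffD1[OF r(2)] ry(1) reach_trans[OF reach_sym[OF a(2)] ry(2)]])
          then show ?thesis using r(2) by simp
        next
          assume a: "(adj I ends)\<^sup>*\<^sup>* r1 y" "(adj I ends)\<^sup>*\<^sup>* x r2"
          have "r1 = ry" by (rule Rd'[OF DiffD1[OF r(1)] ry(1) reach_trans[OF a(1) ry(2)]])
          then show ?thesis using r(1) by simp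
        qed
      qed
    qed
  qed
qed

lemma conn_card:
  assumes "finite V" "finite I" "\<forall>e\<in>I. fst (ends e) \<in> V \<and> snd (ends e) \<in> V"
    "mg_connected V I ends"
  shows "card V \<le> card I + 1"
proof -
  obtain R where RV: "R \<subseteq> V" and Rc: "\<forall>x\<in>V. \<exists>r\<in>R. (adj I ends)\<^sup>*\<^sup>* x r"
    and Rd: "\<forall>r1\<in>R. \<forall>r2\<in>R. (adj I ends)\<^sup>*\<^sup>* r1 r2 \<longrightarrow> r1 = r2"
    and Rcard: "card V \<le> card I + card R" using comp_lemma[OF assms(2,1,3)] by blast
  have "\<forall>r1\<in>R. \<forall>r2\<in>R. r1 = r2" using Rd RV assms(4) unfolding conn_adj by blast
  then have "card R \<le> Suc 0" using RV assms(1) by (meson card_le_Suc0_iff_eq finite_subset)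
  then show ?thesis using Rcard by simp
qed


lemma reach_replace:
  assumes "\<And>x y. adj I ends x y \<Longrightarrow> (adj J ends)\<^sup>*\<^sup>* x y"
    and "(adj I ends)\<^sup>*\<^sup>* u w"
  shows "(adj J ends)\<^sup>*\<^sup>* u w"
  using assms(2)
proof (induction rule: rtranclp_induct)
  case base then show ?case by simp
next
  case (step y z)
  show ?case by (rule reach_trans[OF step(3) assms(1)[OF step(2)]])
qed

lemma cycle_conn:
  assumes "mg_has_cycle V I ends" "mg_connected V I ends"
  shows "\<exists>e\<in>I. mg_connected V (I - {e}) ends"
proof -
  obtain es vs where c: "es \<noteq> []" "length vs = length es" "distinct es" "distinct vs"
    "set es \<subseteq> I" "set vs \<subseteq> V"
    "\<forall>m<length es. ends (es ! m) = (vs ! m, vs ! ((m + 1) mod length es)) \<or>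
                        ends (es ! m) = (vs ! ((m + 1) mod length es), vs ! m)"
    using assms(1) unfolding mg_has_cycle_def by blast
  define k where "k = length es"
  have k0: "0 < k" using c(1) k_def by simp
  define e where "e = es ! 0"
  have eI: "e \<in> I" using c(1,5) e_def by (simp add: subset_iff)
  define J where "J = I - {e}"
  have claim: "\<forall>m. 1 \<le> m \<longrightarrow> m \<le> k \<longrightarrow> (adj J ends)\<^sup>*\<^sup>* (vs ! (1 mod k)) (vs ! (m mod k))"
  proof
    fix m show "1 \<le> m \<longrightarrow> m \<le> k \<longrightarrow> (adj J ends)\<^sup>*\<^sup>* (vs ! (1 mod k)) (vs ! (m mod k))"
    proof (induction m)
      case 0 then show ?case by simp
    next
      case (Suc m)
      show ?case
      proof (cases "m = 0")
        case True then show ?thesis by simp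
      next
        case False
        show ?thesis
        proof (intro impI)
          assume "1 \<le> Suc m" "Suc m \<le> k"
          then have mk: "m < k" "1 \<le> m" using False by auto
          then have IH: "(adj J ends)\<^sup>*\<^sup>* (vs ! (1 mod k)) (vs ! m)" using Suc.IH by simp
          have ne: "es ! m \<noteq> e" unfolding e_def using c(1,3) mk k_def False nth_eq_iff_index_eq[of es m 0]
            by auto
          have inI: "es ! m \<in> I" using c(5) mk k_def by (meson nth_mem subsetD)
          have "ends (es ! m) = (vs ! m, vs ! (Suc m mod k)) \<or> ends (es ! m) = (vs ! (Suc m mod k), vs ! m)"
            using c(7) mk k_def by simp
          then have "(adj J ends)\<^sup>*\<^sup>* (vs ! m) (vs ! (Suc m mod k))"
            using ne inI J_def by (intro reach_step[of "es ! m"]) auto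
          then show "(adj J ends)\<^sup>*\<^sup>* (vs ! (1 mod k)) (vs ! (Suc m mod k))"
            by (rule reach_trans[OF IH])
        qed
      qed
    qed
  qed
  have "(adj J ends)\<^sup>*\<^sup>* (vs ! (1 mod k)) (vs ! (k mod k))" using claim k0 by (metis One_nat_def Suc_leI order_refl)
  then have r10: "(adj J ends)\<^sup>*\<^sup>* (vs ! (1 mod k)) (vs ! 0)" by simp
  have ee: "ends e = (vs ! 0, vs ! (1 mod k)) \<or> ends e = (vs ! (1 mod k), vs ! 0)"
    using c(7) k0 k_def e_def by auto
  have "\<And>x y. adj I ends x y \<Longrightarrow> (adj J ends)\<^sup>*\<^sup>* x y"
  proof -
    fix x y assume "adj I ends x y"
    then obtain e' where e': "e' \<in> I" "ends e' = (x, y) \<or> ends e' = (y, x)" unfolding adj_def by blast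
    show "(adj J ends)\<^sup>*\<^sup>* x y"
    proof (cases "e' = e")
      case False then show ?thesis using e' J_def by (intro reach_step[of e']) auto
    next
      case True
      then have "(x = vs ! 0 \<and> y = vs ! (1 mod k)) \<or> (y = vs ! 0 \<and> x = vs ! (1 mod k))"
        using ee e'(2) by auto
      then show ?thesis using r10 reach_sym[OF r10] by auto
    qed
  qed
  then have "mg_connected V J ends" using assms(2) reach_replace unfolding conn_adj by metis
  then show ?thesis using eI J_def by blast
qed

definition Inv :: "'v set \<Rightarrow> 'e set \<Rightarrow> ('e \<Rightarrow> 'v \<times> 'v) \<Rightarrow> bool" where
  "Inv V I ends \<longleftrightarrow> finite V \<and> finite I \<and> V \<noteq> {} \<and> (\<forall>e\<in>I. fst (ends e) \<in> V \<and> snd (ends e) \<in> V)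
     \<and> mg_connected V I ends \<and> card I + 1 = card V"

lemma Inv_tree: assumes "Inv V I ends" shows "mg_is_tree V I ends"
proof -
  have "\<not> mg_has_cycle V I ends"
  proof
    assume "mg_has_cycle V I ends"
    then obtain e where e: "e \<in> I" "mg_connected V (I - {e}) ends"
      using cycle_conn assms unfolding Inv_def by blast
    have "card V \<le> card (I - {e}) + 1"
      using assms e unfolding Inv_def by (intro conn_card) auto
    then show False using assms e unfolding Inv_def
      by (simp add: card_Diff_singleton) (metis One_nat_def Suc_pred card_gt_0_iff empty_iff le_SucI not_less_eq_eq)
  qed
  then show ?thesis using assms unfolding Inv_def mg_is_tree_def by blast
qed

lemma reach_map:
  assumes "\<forall>e\<in>I. ends' e = map_prod h h (ends e)" "(adj I ends)\<^sup>*\<^sup>* x y"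
  shows "(adj I ends')\<^sup>*\<^sup>* (h x) (h y)"
  using assms(2)
proof (induction rule: rtranclp_induct)
  case base then show ?case by simp
next
  case (step y z)
  obtain e where "e \<in> I" "ends e = (y, z) \<or> ends e = (z, y)" using step(2) unfolding adj_def by blast
  then have "(adj I ends')\<^sup>*\<^sup>* (h y) (h z)" using assms(1) by (intro reach_step[of e]) auto
  then show ?case by (rule reach_trans[OF step(3)])
qed

lemma Inv_relabel:
  assumes "Inv V I ends" "inj_on h V" "\<forall>e\<in>I. ends' e = map_prod h h (ends e)"
  shows "Inv (h ` V) I ends'"
proof -
  have "\<forall>e\<in>I. fst (ends' e) \<in> h ` V \<and> snd (ends' e) \<in> h ` V"
    using assms(1,3) unfolding Inv_def by (metis fst_map_prod snd_map_prod imageI)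
  moreover have "mg_connected (h ` V) I ends'"
    using assms(1) reach_map[OF assms(3)] unfolding Inv_def conn_adj by blast
  moreover have "card (h ` V) = card V" using assms(2) by (rule card_image)
  ultimately show ?thesis using assms(1) unfolding Inv_def by auto
qed

lemma Inv_leaf:
  assumes "Inv V I ends" "w \<notin> V" "e \<notin> I" "u \<in> V" "ends e = (w, u) \<or> ends e = (u, w)"
  shows "Inv (insert w V) (insert e I) ends"
proof -
  have sub: "I \<subseteq> insert e I" by auto
  have wu: "(adj (insert e I) ends)\<^sup>*\<^sup>* w u" using assms(5) by (intro reach_step[of e]) auto
  have toU: "\<forall>z\<in>insert w V. (adj (insert e I) ends)\<^sup>*\<^sup>* z u"
  proof
    fix z assume "z \<in> insert w V"
    then show "(adj (insert e I) ends)\<^sup>*\<^sup>* z u"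
    proof
      assume "z = w" then show ?thesis using wu by simp
    next
      assume "z \<in> V"
      then have "(adj I ends)\<^sup>*\<^sup>* z u" using assms(1,4) unfolding Inv_def conn_adj by blast
      then show ?thesis by (rule reach_mono[OF sub])
    qed
  qed
  have "mg_connected (insert w V) (insert e I) ends"
    unfolding conn_adj using toU reach_sym reach_trans by metis
  moreover have "\<forall>e'\<in>insert e I. fst (ends e') \<in> insert w V \<and> snd (ends e') \<in> insert w V"
    using assms(1,4,5) unfolding Inv_def by auto
  moreover have "card (insert e I) = card I + 1" "card (insert w V) = card V + 1"
    using assms(1,2,3) unfolding Inv_def by auto
  ultimately show ?thesis using assms(1) unfolding Inv_def by auto
qed

lemma dich:
  assumes "(adj I ends)\<^sup>*\<^sup>* P z" "ends e0 = (P, Q)"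
  shows "(adj (I - {e0}) ends)\<^sup>*\<^sup>* P z \<or> (adj (I - {e0}) ends)\<^sup>*\<^sup>* Q z"
  using assms(1)
proof (induction rule: rtranclp_induct)
  case base then show ?case by simp
next
  case (step y z)
  obtain e where e: "e \<in> I" "ends e = (y, z) \<or> ends e = (z, y)" using step(2) unfolding adj_def by blast
  show ?case
  proof (cases "e = e0")
    case True
    then have "z = P \<or> z = Q" using e(2) assms(2) by auto
    then show ?thesis by auto
  next
    case False
    then have "adj (I - {e0}) ends y z" using e unfolding adj_def by blast
    then show ?thesis using step(3) by (meson rtranclp.rtrancl_into_rtrancl)
  qed
qed

lemma Inv_dich:
  assumes "Inv V I ends" "e0 \<in> I" "ends e0 = (P, Q)" "z \<in> V"
  shows "(adj (I - {e0}) ends)\<^sup>*\<^sup>* P z \<or> (adj (I - {e0}) ends)\<^sup>*\<^sup>* Q z"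
proof -
  have "P \<in> V" using assms(1,2,3) unfolding Inv_def by (metis fst_conv)
  then have "(adj I ends)\<^sup>*\<^sup>* P z" using assms(1,4) unfolding Inv_def conn_adj by blast
  then show ?thesis using dich assms(3) by metis
qed

lemma Inv_swap:
  assumes "Inv V I ends" "e0 \<in> I" "ends e0 = (P, Q)" "e1 \<notin> I" "X \<in> V" "Y \<in> V"
    "ends e1 = (X, Y)"
    "((adj (I - {e0}) ends)\<^sup>*\<^sup>* P X \<and> (adj (I - {e0}) ends)\<^sup>*\<^sup>* Q Y) \<or>
     ((adj (I - {e0}) ends)\<^sup>*\<^sup>* Q X \<and> (adj (I - {e0}) ends)\<^sup>*\<^sup>* P Y)"
  shows "Inv V (insert e1 (I - {e0})) ends"
proof -
  define J where "J = I - {e0}"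
  have sub: "J \<subseteq> insert e1 J" by auto
  have xy: "(adj (insert e1 J) ends)\<^sup>*\<^sup>* X Y" using assms(7) by (intro reach_step[of e1]) auto
  have PQ: "(adj (insert e1 J) ends)\<^sup>*\<^sup>* P Q"
    using assms(8) unfolding J_def[symmetric]
  proof (elim disjE conjE)
    assume a: "(adj J ends)\<^sup>*\<^sup>* P X" "(adj J ends)\<^sup>*\<^sup>* Q Y"
    show ?thesis using reach_trans[OF reach_trans[OF reach_mono[OF sub a(1)] xy] reach_sym[OF reach_mono[OF sub a(2)]]] .
  next
    assume a: "(adj J ends)\<^sup>*\<^sup>* Q X" "(adj J ends)\<^sup>*\<^sup>* P Y"
    show ?thesis using reach_trans[OF reach_trans[OF reach_mono[OF sub a(2)] reach_sym[OF xy]] reach_sym[OF reach_mono[OF sub a(1)]]] .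
  qed
  have toP: "\<forall>z\<in>V. (adj (insert e1 J) ends)\<^sup>*\<^sup>* z P"
  proof
    fix z assume "z \<in> V"
    then have "(adj J ends)\<^sup>*\<^sup>* P z \<or> (adj J ends)\<^sup>*\<^sup>* Q z" using Inv_dich assms(1,2,3) J_def by metis
    then show "(adj (insert e1 J) ends)\<^sup>*\<^sup>* z P"
    proof
      assume "(adj J ends)\<^sup>*\<^sup>* P z"
      then show ?thesis by (rule reach_sym[OF reach_mono[OF sub]])
    next
      assume "(adj J ends)\<^sup>*\<^sup>* Q z"
      then have "(adj (insert e1 J) ends)\<^sup>*\<^sup>* z Q" by (rule reach_sym[OF reach_mono[OF sub]])
      then show ?thesis by (rule reach_trans[OF _ reach_sym[OF PQ]])
    qed
  qed
  have "mg_connected V (insert e1 J) ends"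
    unfolding conn_adj using toP reach_sym reach_trans by metis
  moreover have "\<forall>e'\<in>insert e1 J. fst (ends e') \<in> V \<and> snd (ends e') \<in> V"
    using assms(1,5,6,7) unfolding Inv_def J_def by auto
  moreover have "card (insert e1 J) = card I"
    using assms(1,2,4) unfolding Inv_def J_def
    by (simp add: card_Diff_singleton) (metis Suc_pred card_gt_0_iff empty_iff)
  ultimately show ?thesis using assms(1) unfolding Inv_def J_def by auto
qed



lemma leaves_Leaf[simp]: "leaves (Leaf i) = {i}" by (simp add: leaves_def)
lemma leaves_Node[simp]: "leaves (Node l r) = leaves l \<union> leaves r" by (simp add: leaves_def)

lemma leaves_ne: "leaves t \<noteq> {}" by (induction t) auto

definition nontriv :: "nat set \<Rightarrow> bool" where "nontriv S \<longleftrightarrow> (\<exists>x\<in>S. \<exists>y\<in>S. x \<noteq> y)"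

lemma distinct_Node: "distinct (leaf_list (Node l r)) \<Longrightarrow>
   distinct (leaf_list l) \<and> distinct (leaf_list r) \<and> leaves l \<inter> leaves r = {}"
  by (simp add: leaves_def)

lemma clade_sub: "C \<in> clades T \<Longrightarrow> C \<subseteq> leaves T"
  by (induction T) auto

lemma clade_nontriv: "distinct (leaf_list T) \<Longrightarrow> C \<in> clades T \<Longrightarrow> nontriv C"
proof (induction T)
  case (Leaf x) then show ?case by simp
next
  case (Node l r)
  note d = distinct_Node[OF Node.prems(1)]
  show ?case
  proof (cases "C = leaves (Node l r)")
    case True
    obtain x where x: "x \<in> leaves l" using leaves_ne by blast
    obtain y where y: "y \<in> leaves r" using leaves_ne by blast
    have "x \<noteq> y" using d x y by auto
    moreover have "x \<in> C" "y \<in> C" using True x y by auto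
    ultimately show ?thesis unfolding nontriv_def by blast
  next
    case False
    then have "C \<in> clades l \<or> C \<in> clades r" using Node.prems(2) by simp
    then show ?thesis
    proof
      assume "C \<in> clades l" then show ?thesis using Node.IH(1) d by blast
    next
      assume "C \<in> clades r" then show ?thesis using Node.IH(2) d by blast
    qed
  qed
qed

fun lca :: "btree \<Rightarrow> nat set \<Rightarrow> nat set" where
  "lca (Leaf i) S = {i}"
| "lca (Node l r) S = (if S \<subseteq> leaves l then lca l S else if S \<subseteq> leaves r then lca r S
     else leaves (Node l r))"

lemma nontriv_single: "S \<subseteq> {i} \<Longrightarrow> \<not> nontriv S"
  unfolding nontriv_def by auto

lemma lca_props:
  "distinct (leaf_list T) \<Longrightarrow> S \<subseteq> leaves T \<Longrightarrow> nontriv S \<Longrightarrow>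
   lca T S \<in> clades T \<and> S \<subseteq> lca T S \<and> (\<forall>C\<in>clades T. S \<subseteq> C \<longrightarrow> lca T S \<subseteq> C)"
proof (induction T)
  case (Leaf x) then show ?case using nontriv_single by auto
next
  case (Node l r)
  note d = distinct_Node[OF Node.prems(1)]
  have Sne: "S \<noteq> {}" using Node.prems(3) unfolding nontriv_def by auto
  show ?case
  proof (cases "S \<subseteq> leaves l")
    case True
    have IH: "lca l S \<in> clades l \<and> S \<subseteq> lca l S \<and> (\<forall>C\<in>clades l. S \<subseteq> C \<longrightarrow> lca l S \<subseteq> C)"
      using Node.IH(1) d True Node.prems(3) by blast
    have "lca l S \<subseteq> leaves l" using IH clade_sub by blast
    moreover have "\<not> S \<subseteq> C" if "C \<in> clades r" for C
      using clade_sub[OF that] True d Sne by blast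
    ultimately show ?thesis using True IH by auto
  next
    case False
    note F1 = False
    show ?thesis
    proof (cases "S \<subseteq> leaves r")
      case True
      have IH: "lca r S \<in> clades r \<and> S \<subseteq> lca r S \<and> (\<forall>C\<in>clades r. S \<subseteq> C \<longrightarrow> lca r S \<subseteq> C)"
        using Node.IH(2) d True Node.prems(3) by blast
      have "lca r S \<subseteq> leaves r" using IH clade_sub by blast
      moreover have "\<not> S \<subseteq> C" if "C \<in> clades l" for C
        using clade_sub[OF that] F1 by blast
      ultimately show ?thesis using True F1 IH by auto
    next
      case False
      have "\<not> S \<subseteq> C" if "C \<in> clades l" for C
        using clade_sub[OF that] F1 by blast
      moreover have "\<not> S \<subseteq> C" if "C \<in> clades r" for C
        using clade_sub[OF that] False by blast
      ultimately show ?thesis using False F1 Node.prems(2) by auto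
    qed
  qed
qed

lemma cT_lca:
  assumes "binary_tree_on L T" "S \<subseteq> L" "nontriv S"
  shows "cT T S = lca T S"
proof -
  have d: "distinct (leaf_list T)" and L: "leaves T = L" using assms(1) unfolding binary_tree_on_def leaves_def by auto
  have P: "lca T S \<in> clades T \<and> S \<subseteq> lca T S \<and> (\<forall>C\<in>clades T. S \<subseteq> C \<longrightarrow> lca T S \<subseteq> C)"
    using lca_props[OF d] assms(2,3) L by auto
  show ?thesis unfolding cT_def
  proof (rule the_equality)
    show "lca T S \<in> clades T \<and> S \<subseteq> lca T S \<and> (\<forall>C'\<in>clades T. S \<subseteq> C' \<longrightarrow> lca T S \<subseteq> C')" by (rule P)
  next
    fix C assume "C \<in> clades T \<and> S \<subseteq> C \<and> (\<forall>C'\<in>clades T. S \<subseteq> C' \<longrightarrow> C \<subseteq> C')"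
    then show "C = lca T S" using P by blast
  qed
qed

lemma cT_in:
  assumes "binary_tree_on L T" "S \<subseteq> L" "nontriv S"
  shows "cT T S \<in> clades T"
proof -
  have d: "distinct (leaf_list T)" and L: "leaves T = L" using assms(1) unfolding binary_tree_on_def leaves_def by auto
  show ?thesis using cT_lca[OF assms] lca_props[OF d] assms(2,3) L by auto
qed

fun ins :: "nat \<Rightarrow> nat \<Rightarrow> btree \<Rightarrow> btree" where
  "ins a v (Leaf i) = (if i = a then Node (Leaf a) (Leaf v) else Leaf i)"
| "ins a v (Node l r) = Node (ins a v l) (ins a v r)"

definition fx :: "nat \<Rightarrow> nat \<Rightarrow> nat set \<Rightarrow> nat set" where
  "fx a v C = (if a \<in> C then insert v C else C)"

lemma fx_Un: "fx a v (A \<union> B) = fx a v A \<union> fx a v B" by (auto simp: fx_def)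

lemma leaves_ins: "leaves (ins a v t) = fx a v (leaves t)"
  by (induction t) (auto simp: fx_def)

lemma distinct_ins: "distinct (leaf_list t) \<Longrightarrow> v \<notin> leaves t \<Longrightarrow> distinct (leaf_list (ins a v t))"
proof (induction t)
  case (Leaf x) then show ?case by auto
next
  case (Node l r)
  note d = distinct_Node[OF Node.prems(1)]
  have "distinct (leaf_list (ins a v l))" "distinct (leaf_list (ins a v r))" using Node d by auto
  moreover have "leaves (ins a v l) \<inter> leaves (ins a v r) = {}"
    unfolding leaves_ins using d Node.prems(2) by (auto simp: fx_def)
  ultimately show ?case by (simp add: leaves_def)
qed

lemma bt_ins:
  assumes "binary_tree_on L t" "a \<in> L" "v \<notin> L"
  shows "binary_tree_on (insert v L) (ins a v t)"
proof -
  have d: "distinct (leaf_list t)" and L: "leaves t = L" using assms(1) unfolding binary_tree_on_def leaves_def by auto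
  have "distinct (leaf_list (ins a v t))" using distinct_ins d L assms(3) by blast
  moreover have "set (leaf_list (ins a v t)) = insert v L"
    using leaves_ins[of a v t] L assms(2) unfolding leaves_def by (auto simp: fx_def)
  ultimately show ?thesis unfolding binary_tree_on_def by blast
qed

lemma clades_ins: "clades (ins a v t) = fx a v ` clades t \<union> (if a \<in> leaves t then {{a, v}} else {})"
proof (induction t)
  case (Leaf x) then show ?case by (auto simp: leaves_def)
next
  case (Node l r)
  have "clades (ins a v (Node l r)) = insert (fx a v (leaves (Node l r))) (clades (ins a v l) \<union> clades (ins a v r))"
    by (metis clades.simps(2) ins.simps(2) leaves_ins)
  also have "\<dots> = fx a v ` clades (Node l r) \<union> (if a \<in> leaves (Node l r) then {{a, v}} else {})"
    unfolding Node.IH clades.simps image_insert image_Un by (auto split: if_splits)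
  finally show ?case .
qed


lemma sub_fx1: "v \<notin> S \<Longrightarrow> S \<subseteq> fx a v A \<longleftrightarrow> S \<subseteq> A"
  by (auto simp: fx_def)

lemma sub_fx2: "v \<notin> S \<Longrightarrow> v \<notin> A \<Longrightarrow> insert v S \<subseteq> fx a v A \<longleftrightarrow> insert a S \<subseteq> A"
  by (auto simp: fx_def)

lemma lca_ins1:
  "distinct (leaf_list t) \<Longrightarrow> v \<notin> leaves t \<Longrightarrow> S \<subseteq> leaves t \<Longrightarrow> nontriv S \<Longrightarrow>
   lca (ins a v t) S = fx a v (lca t S)"
proof (induction t)
  case (Leaf x) then show ?case using nontriv_single[of S x] by simp
next
  case (Node l r)
  note d = distinct_Node[OF Node.prems(1)]
  have vS: "v \<notin> S" using Node.prems(2,3) by blast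
  have e1: "S \<subseteq> leaves (ins a v l) \<longleftrightarrow> S \<subseteq> leaves l" unfolding leaves_ins using sub_fx1[OF vS] .
  have e2: "S \<subseteq> leaves (ins a v r) \<longleftrightarrow> S \<subseteq> leaves r" unfolding leaves_ins using sub_fx1[OF vS] .
  show ?case
  proof (cases "S \<subseteq> leaves l")
    case True
    then show ?thesis using e1 Node.IH(1) d Node.prems by simp
  next
    case False
    note F = False
    show ?thesis
    proof (cases "S \<subseteq> leaves r")
      case True
      then show ?thesis using e1 e2 F Node.IH(2) d Node.prems by simp
    next
      case False
      then show ?thesis using e1 e2 F by (simp add: leaves_ins fx_Un)
    qed
  qed
qed

lemma lca_ins2:
  "distinct (leaf_list t) \<Longrightarrow> v \<notin> leaves t \<Longrightarrow> insert a S \<subseteq> leaves t \<Longrightarrow> nontriv (insert a S) \<Longrightarrow>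
   lca (ins a v t) (insert v S) = fx a v (lca t (insert a S))"
proof (induction t)
  case (Leaf x) then show ?case using nontriv_single[of "insert a S" x] by simp
next
  case (Node l r)
  note d = distinct_Node[OF Node.prems(1)]
  have vS: "v \<notin> S" using Node.prems(2,3) by blast
  have vl: "v \<notin> leaves l" and vr: "v \<notin> leaves r" using Node.prems(2) by auto
  have e1: "insert v S \<subseteq> leaves (ins a v l) \<longleftrightarrow> insert a S \<subseteq> leaves l" unfolding leaves_ins using sub_fx2[OF vS vl] .
  have e2: "insert v S \<subseteq> leaves (ins a v r) \<longleftrightarrow> insert a S \<subseteq> leaves r" unfolding leaves_ins using sub_fx2[OF vS vr] .
  show ?case
  proof (cases "insert a S \<subseteq> leaves l")
    case True
    have "lca (ins a v (Node l r)) (insert v S) = lca (ins a v l) (insert v S)" using True e1 by (simp only: ins.simps lca.simps if_True)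
    also have "\<dots> = fx a v (lca l (insert a S))"
      by (rule Node.IH(1)) (use d vl True Node.prems(4) in auto)
    also have "lca l (insert a S) = lca (Node l r) (insert a S)" using True by (simp only: lca.simps if_True if_False)
    finally show ?thesis .
  next
    case False
    note F = False
    show ?thesis
    proof (cases "insert a S \<subseteq> leaves r")
      case True
      have "lca (ins a v (Node l r)) (insert v S) = lca (ins a v r) (insert v S)" using True F e1 e2 by (simp only: ins.simps lca.simps if_True if_False)
      also have "\<dots> = fx a v (lca r (insert a S))"
        by (rule Node.IH(2)) (use d vr True Node.prems(4) in auto)
      also have "lca r (insert a S) = lca (Node l r) (insert a S)" using True F by (simp only: lca.simps if_True if_False)
      finally show ?thesis .
    next
      case False
      have "lca (ins a v (Node l r)) (insert v S) = leaves (Node (ins a v l) (ins a v r))"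
        using e1 e2 F False by (simp only: ins.simps lca.simps if_False)
      also have "\<dots> = fx a v (leaves (Node l r))" by (metis ins.simps(2) leaves_ins)
      also have "leaves (Node l r) = lca (Node l r) (insert a S)" using F False by (simp only: lca.simps if_False)
      finally show ?thesis .
    qed
  qed
qed

lemma lca_ins3:
  "distinct (leaf_list t) \<Longrightarrow> v \<notin> leaves t \<Longrightarrow> a \<in> leaves t \<Longrightarrow> lca (ins a v t) {a, v} = {a, v}"
proof (induction t)
  case (Leaf x)
  then have "x = a" "v \<noteq> a" by auto
  then show ?case by (simp add: insert_commute)
next
  case (Node l r)
  note d = distinct_Node[OF Node.prems(1)]
  have vl: "v \<notin> leaves l" and vr: "v \<notin> leaves r" using Node.prems(2) by auto
  show ?case
  proof (cases "a \<in> leaves l")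
    case True
    have c1: "({a, v} \<subseteq> leaves (ins a v l)) = True" using True unfolding leaves_ins by (auto simp: fx_def)
    have "lca (ins a v l) {a, v} = {a, v}" by (rule Node.IH(1)) (use d vl True in auto)
    then show ?thesis by (simp only: ins.simps lca.simps c1 if_True)
  next
    case False
    have ar: "a \<in> leaves r" using False Node.prems(3) by simp
    have c1: "({a, v} \<subseteq> leaves (ins a v l)) = False" using False unfolding leaves_ins by (auto simp: fx_def)
    have c2: "({a, v} \<subseteq> leaves (ins a v r)) = True" using ar unfolding leaves_ins by (auto simp: fx_def)
    have "lca (ins a v r) {a, v} = {a, v}" by (rule Node.IH(2)) (use d vr ar in auto)
    then show ?thesis by (simp only: ins.simps lca.simps c1 c2 if_True if_False)
  qed
qed

lemma nontriv2: "x \<noteq> y \<Longrightarrow> nontriv {x, y}" unfolding nontriv_def by blast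

lemma cT_ins_old:
  assumes "binary_tree_on V T" "a \<in> V" "v \<notin> V" "x \<in> V" "y \<in> V" "x \<noteq> y"
  shows "cT (ins a v T) {x, y} = fx a v (cT T {x, y})"
proof -
  have d: "distinct (leaf_list T)" and L: "leaves T = V" using assms(1) unfolding binary_tree_on_def leaves_def by auto
  have bt: "binary_tree_on (insert v V) (ins a v T)" by (rule bt_ins[OF assms(1-3)])
  have "cT (ins a v T) {x, y} = lca (ins a v T) {x, y}"
    by (rule cT_lca[OF bt]) (use assms nontriv2 in auto)
  also have "\<dots> = fx a v (lca T {x, y})"
    by (rule lca_ins1) (use d L assms nontriv2 in auto)
  also have "lca T {x, y} = cT T {x, y}"
    by (rule cT_lca[symmetric, OF assms(1)]) (use assms nontriv2 in auto)
  finally show ?thesis .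
qed

lemma cT_ins_new:
  assumes "binary_tree_on V T" "a \<in> V" "v \<notin> V" "x \<in> V"
  shows "cT (ins a v T) {v, x} = (if x = a then {a, v} else fx a v (cT T {a, x}))"
proof -
  have d: "distinct (leaf_list T)" and L: "leaves T = V" using assms(1) unfolding binary_tree_on_def leaves_def by auto
  have bt: "binary_tree_on (insert v V) (ins a v T)" by (rule bt_ins[OF assms(1-3)])
  have vx: "v \<noteq> x" using assms by auto
  have "cT (ins a v T) {v, x} = lca (ins a v T) {v, x}"
    by (rule cT_lca[OF bt]) (use assms nontriv2[OF vx] in auto)
  show ?thesis
  proof (cases "x = a")
    case True
    have "lca (ins a v T) {a, v} = {a, v}" by (rule lca_ins3) (use d L assms in auto)
    then show ?thesis using True \<open>cT (ins a v T) {v, x} = lca (ins a v T) {v, x}\<close> by (simp add: insert_commute)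
  next
    case False
    have "lca (ins a v T) (insert v {x}) = fx a v (lca T (insert a {x}))"
      by (rule lca_ins2) (use d L assms False nontriv2 in auto)
    moreover have "lca T {a, x} = cT T {a, x}"
      by (rule cT_lca[symmetric, OF assms(1)]) (use assms False nontriv2 in auto)
    ultimately show ?thesis using False \<open>cT (ins a v T) {v, x} = lca (ins a v T) {v, x}\<close> by simp
  qed
qed

lemma fx_minus: "v \<notin> C \<Longrightarrow> fx a v C - {v} = C" by (auto simp: fx_def)

lemma fx_inj: "inj_on (fx a v) {C. v \<notin> C}"
proof (rule inj_onI)
  fix x y assume "x \<in> {C. v \<notin> C}" "y \<in> {C. v \<notin> C}" "fx a v x = fx a v y"
  then show "x = y" using fx_minus by (metis mem_Collect_eq)
qed

lemma fx_neq: assumes "v \<notin> C" "nontriv C" shows "fx a v C \<noteq> {a, v}"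
proof
  assume "fx a v C = {a, v}"
  then have "C = {a, v} - {v}" using fx_minus[OF assms(1)] by metis
  then have "C \<subseteq> {a}" by auto
  then show False using nontriv_single assms(2) by blast
qed



definition simpleE :: "nat set \<Rightarrow> nat set set \<Rightarrow> bool" where
  "simpleE V E \<longleftrightarrow> (\<forall>e\<in>E. \<exists>x y. e = {x, y} \<and> x \<noteq> y \<and> x \<in> V \<and> y \<in> V)"

lemma hb_basic: "henneberg V E \<Longrightarrow> finite (V::nat set) \<and> simpleE V E"
proof (induction rule: henneberg.induct)
  case (K2 a b) then show ?case unfolding simpleE_def by auto
next
  case (move1 V E v i j)
  have "v \<noteq> i" "v \<noteq> j" using move1.hyps by auto
  have "\<forall>e\<in>E. \<exists>x y. e = {x, y} \<and> x \<noteq> y \<and> x \<in> insert v V \<and> y \<in> insert v V"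
    using move1.IH unfolding simpleE_def by (meson insertCI)
  then have "simpleE (insert v V) (E \<union> {{v, i}, {v, j}})"
    unfolding simpleE_def using \<open>v \<noteq> i\<close> \<open>v \<noteq> j\<close> move1.hyps by auto
  then show ?case using move1.IH by simp
next
  case (move2 V E v i j k)
  have "v \<noteq> i" "v \<noteq> j" "v \<noteq> k" using move2.hyps move2.IH unfolding simpleE_def
    by (metis doubleton_eq_iff)+
  have "i \<in> V" "j \<in> V" using move2.hyps move2.IH unfolding simpleE_def
    by (metis doubleton_eq_iff)+
  have "\<forall>e\<in>E. \<exists>x y. e = {x, y} \<and> x \<noteq> y \<and> x \<in> insert v V \<and> y \<in> insert v V"
    using move2.IH unfolding simpleE_def by (meson insertCI)
  then have "simpleE (insert v V) ((E - {{i, j}}) \<union> {{v, i}, {v, j}, {v, k}})"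
    unfolding simpleE_def using \<open>v \<noteq> i\<close> \<open>v \<noteq> j\<close> \<open>v \<noteq> k\<close> \<open>i \<in> V\<close> \<open>j \<in> V\<close> move2.hyps by auto
  then show ?case using move2.IH by simp
qed

lemma fresh_edge: "simpleE V E \<Longrightarrow> v \<notin> V \<Longrightarrow> {v, x} \<notin> E"
  unfolding simpleE_def by (metis doubleton_eq_iff insertI1 insert_commute)

lemma inj_map_sum: assumes "inj_on f A" "inj_on g B" shows "inj_on (map_sum f g) (Inl ` A \<union> Inr ` B)"
proof (rule inj_onI)
  fix x y assume x: "x \<in> Inl ` A \<union> Inr ` B" and y: "y \<in> Inl ` A \<union> Inr ` B"
    and e: "map_sum f g x = map_sum f g y"
  from x y show "x = y"
  proof (elim UnE imageE)
    fix p q assume "x = Inl p" "p \<in> A" "y = Inl q" "q \<in> A"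
    then show "x = y" using e assms(1) by (simp add: inj_on_eq_iff)
  next
    fix p q assume "x = Inl p" "p \<in> A" "y = Inr q" "q \<in> B"
    then show "x = y" using e by simp
  next
    fix p q assume "x = Inr p" "p \<in> B" "y = Inl q" "q \<in> A"
    then show "x = y" using e by simp
  next
    fix p q assume "x = Inr p" "p \<in> B" "y = Inr q" "q \<in> B"
    then show "x = y" using e assms(2) by (simp add: inj_on_eq_iff)
  qed
qed

lemma image_map_sum: "map_sum f g ` (Inl ` A \<union> Inr ` B) = Inl ` (f ` A) \<union> Inr ` (g ` B)"
  by (simp add: image_Un image_image)

lemma bt_leaves: "binary_tree_on V T \<Longrightarrow> leaves T = V \<and> distinct (leaf_list T)"
  unfolding binary_tree_on_def leaves_def by auto

lemma step_relabel:
  assumes bt1: "binary_tree_on V T1" and bt2: "binary_tree_on V T2"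
    and inv: "Inv (rcg_vertices T1 T2) E (rcg_ends T1 T2)"
    and sE: "simpleE V E" and a: "a \<in> V" and b: "b \<in> V" and v: "v \<notin> V"
  shows "Inv (map_sum (fx a v) (fx b v) ` rcg_vertices T1 T2) E (rcg_ends (ins a v T1) (ins b v T2))"
    and "rcg_vertices (ins a v T1) (ins b v T2) =
           insert (Inl {a, v}) (insert (Inr {b, v}) (map_sum (fx a v) (fx b v) ` rcg_vertices T1 T2))"
    and "Inl {a, v} \<notin> map_sum (fx a v) (fx b v) ` rcg_vertices T1 T2"
    and "Inr {b, v} \<notin> map_sum (fx a v) (fx b v) ` rcg_vertices T1 T2"
    and "\<forall>e\<in>E. rcg_ends (ins a v T1) (ins b v T2) e =
            map_prod (map_sum (fx a v) (fx b v)) (map_sum (fx a v) (fx b v)) (rcg_ends T1 T2 e)"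
proof -
  define h where "h = map_sum (fx a v) (fx b v)"
  have L1: "leaves T1 = V" and d1: "distinct (leaf_list T1)" using bt_leaves[OF bt1] by auto
  have L2: "leaves T2 = V" and d2: "distinct (leaf_list T2)" using bt_leaves[OF bt2] by auto
  have c1: "clades T1 \<subseteq> {C. v \<notin> C}" using clade_sub L1 v by blast
  have c2: "clades T2 \<subseteq> {C. v \<notin> C}" using clade_sub L2 v by blast
  have inj: "inj_on h (rcg_vertices T1 T2)" unfolding h_def rcg_vertices_def
    by (rule inj_map_sum; rule inj_on_subset[OF fx_inj]) (use c1 c2 in auto)
  show ends: "\<forall>e\<in>E. rcg_ends (ins a v T1) (ins b v T2) e = map_prod h h (rcg_ends T1 T2 e)"
  proof
    fix e assume "e \<in> E"
    then obtain x y where xy: "e = {x, y}" "x \<noteq> y" "x \<in> V" "y \<in> V" using sE unfolding simpleE_def by blast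
    show "rcg_ends (ins a v T1) (ins b v T2) e = map_prod h h (rcg_ends T1 T2 e)"
      unfolding rcg_ends_def h_def xy using cT_ins_old[OF bt1 a v xy(3,4,2)] cT_ins_old[OF bt2 b v xy(3,4,2)]
      by simp
  qed
  then show "Inv (h ` rcg_vertices T1 T2) E (rcg_ends (ins a v T1) (ins b v T2))"
    using Inv_relabel[OF inv inj] by blast
  show "rcg_vertices (ins a v T1) (ins b v T2) =
           insert (Inl {a, v}) (insert (Inr {b, v}) (h ` rcg_vertices T1 T2))"
    unfolding rcg_vertices_def clades_ins h_def image_map_sum using a b L1 L2 by auto
  show "Inl {a, v} \<notin> h ` rcg_vertices T1 T2"
  proof
    assume "Inl {a, v} \<in> h ` rcg_vertices T1 T2"
    then obtain C where C: "C \<in> clades T1" "fx a v C = {a, v}"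
      unfolding h_def rcg_vertices_def image_map_sum by auto
    have "v \<notin> C" using C(1) c1 by blast
    then show False using fx_neq C clade_nontriv[OF d1 C(1)] by blast
  qed
  show "Inr {b, v} \<notin> h ` rcg_vertices T1 T2"
  proof
    assume "Inr {b, v} \<in> h ` rcg_vertices T1 T2"
    then obtain C where C: "C \<in> clades T2" "fx b v C = {b, v}"
      unfolding h_def rcg_vertices_def image_map_sum by auto
    have "v \<notin> C" using C(1) c2 by blast
    then show False using fx_neq C clade_nontriv[OF d2 C(1)] by blast
  qed
qed


lemma finish2:
  assumes inv: "Inv W E ends" and e0: "e0 \<in> E" "ends e0 = (P, Q)"
    and fr: "e1 \<notin> E" "e2 \<notin> E" "e3 \<notin> E" "e1 \<noteq> e2" "e1 \<noteq> e3" "e2 \<noteq> e3"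
    and XY: "X \<in> W" "Y \<in> W" "ends e1 = (X, Y)"
    and cond: "((adj (E - {e0}) ends)\<^sup>*\<^sup>* P X \<and> (adj (E - {e0}) ends)\<^sup>*\<^sup>* Q Y) \<or>
     ((adj (E - {e0}) ends)\<^sup>*\<^sup>* Q X \<and> (adj (E - {e0}) ends)\<^sup>*\<^sup>* P Y)"
    and w: "wa \<notin> W" "wb \<notin> W" "wa \<noteq> wb" and U: "U \<in> W" "U' \<in> W"
    and e2: "ends e2 = (wa, U)" and e3: "ends e3 = (U', wb)"
  shows "Inv (insert wa (insert wb W)) (insert e2 (insert e3 (insert e1 (E - {e0})))) ends"
proof -
  have i1: "Inv W (insert e1 (E - {e0})) ends" by (rule Inv_swap[OF inv e0 fr(1) XY cond])
  have i2: "Inv (insert wb W) (insert e3 (insert e1 (E - {e0}))) ends"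
    by (rule Inv_leaf[OF i1 w(2), of e3 U']) (use fr U e3 in auto)
  show ?thesis
    by (rule Inv_leaf[OF i2, of wa e2 U]) (use fr U w e2 in auto)
qed

lemma reach_rel:
  assumes "\<forall>e\<in>E. ends' e = map_prod h h (ends e)" "(adj (E - {e0}) ends)\<^sup>*\<^sup>* x y"
  shows "(adj (E - {e0}) ends')\<^sup>*\<^sup>* (h x) (h y)"
  by (rule reach_map[OF _ assms(2)]) (use assms(1) in blast)

lemma move2_generic:
  assumes bt1: "binary_tree_on V T1" and bt2: "binary_tree_on V T2"
    and inv: "Inv (rcg_vertices T1 T2) E (rcg_ends T1 T2)"
    and sE: "simpleE V E" and a: "a \<in> V" and b: "b \<in> V" and v: "v \<notin> V"
    and e0: "e0 \<in> E"
    and fr: "e1 \<notin> E" "e2 \<notin> E" "e3 \<notin> E" "e1 \<noteq> e2" "e1 \<noteq> e3" "e2 \<noteq> e3"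
    and XY: "X \<in> rcg_vertices T1 T2" "Y \<in> rcg_vertices T1 T2"
    and U: "U \<in> rcg_vertices T1 T2" "U' \<in> rcg_vertices T1 T2"
    and cond: "((adj (E - {e0}) (rcg_ends T1 T2))\<^sup>*\<^sup>* (fst (rcg_ends T1 T2 e0)) X \<and>
                (adj (E - {e0}) (rcg_ends T1 T2))\<^sup>*\<^sup>* (snd (rcg_ends T1 T2 e0)) Y) \<or>
               ((adj (E - {e0}) (rcg_ends T1 T2))\<^sup>*\<^sup>* (snd (rcg_ends T1 T2 e0)) X \<and>
                (adj (E - {e0}) (rcg_ends T1 T2))\<^sup>*\<^sup>* (fst (rcg_ends T1 T2 e0)) Y)"
    and e1: "rcg_ends (ins a v T1) (ins b v T2) e1 = (map_sum (fx a v) (fx b v) X, map_sum (fx a v) (fx b v) Y)"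
    and e2: "rcg_ends (ins a v T1) (ins b v T2) e2 = (Inl {a, v}, map_sum (fx a v) (fx b v) U)"
    and e3: "rcg_ends (ins a v T1) (ins b v T2) e3 = (map_sum (fx a v) (fx b v) U', Inr {b, v})"
  shows "Inv (rcg_vertices (ins a v T1) (ins b v T2)) (insert e2 (insert e3 (insert e1 (E - {e0}))))
            (rcg_ends (ins a v T1) (ins b v T2))"
proof -
  define h where "h = map_sum (fx a v) (fx b v)"
  define ends' where "ends' = rcg_ends (ins a v T1) (ins b v T2)"
  define ends where "ends = rcg_ends T1 T2"
  define W where "W = rcg_vertices T1 T2"
  note sr = step_relabel[OF bt1 bt2 inv sE a b v, folded h_def ends'_def W_def]
  obtain P Q where PQ: "ends e0 = (P, Q)" by (cases "ends e0") auto
  have PQ': "ends' e0 = (h P, h Q)" using sr(5) e0 PQ unfolding ends_def by simp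
  have cond': "((adj (E - {e0}) ends')\<^sup>*\<^sup>* (h P) (h X) \<and> (adj (E - {e0}) ends')\<^sup>*\<^sup>* (h Q) (h Y)) \<or>
     ((adj (E - {e0}) ends')\<^sup>*\<^sup>* (h Q) (h X) \<and> (adj (E - {e0}) ends')\<^sup>*\<^sup>* (h P) (h Y))"
    using cond reach_rel[OF sr(5)[folded ends_def]] PQ unfolding ends_def[symmetric] by auto
  have "Inv (insert (Inl {a, v}) (insert (Inr {b, v}) (h ` W))) (insert e2 (insert e3 (insert e1 (E - {e0})))) ends'"
    by (rule finish2[OF sr(1) e0 PQ' fr _ _ _ cond' sr(3) sr(4) _ _ _ e2[folded h_def ends'_def] e3[folded h_def ends'_def]])
       (use XY U e1 in \<open>auto simp: h_def ends'_def W_def\<close>)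
  then show ?thesis using sr(2) unfolding ends'_def by simp
qed


lemma vert1: "binary_tree_on V T1 \<Longrightarrow> x \<in> V \<Longrightarrow> y \<in> V \<Longrightarrow> x \<noteq> y \<Longrightarrow> Inl (cT T1 {x, y}) \<in> rcg_vertices T1 T2"
  unfolding rcg_vertices_def using cT_in[of V T1 "{x, y}"] nontriv2[of x y] by auto

lemma vert2: "binary_tree_on V T2 \<Longrightarrow> x \<in> V \<Longrightarrow> y \<in> V \<Longrightarrow> x \<noteq> y \<Longrightarrow> Inr (cT T2 {x, y}) \<in> rcg_vertices T1 T2"
  unfolding rcg_vertices_def using cT_in[of V T2 "{x, y}"] nontriv2[of x y] by auto

lemma main:
  "henneberg V E \<Longrightarrow> \<exists>T1 T2. binary_tree_on (V::nat set) T1 \<and> binary_tree_on V T2 \<and>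
      Inv (rcg_vertices T1 T2) E (rcg_ends T1 T2)"
proof (induction rule: henneberg.induct)
  case (K2 a b)
  define T where "T = Node (Leaf a) (Leaf b)"
  have bt: "binary_tree_on {a, b} T" using K2 by (simp add: binary_tree_on_def T_def)
  have cl: "clades T = {{a, b}}" by (simp add: T_def leaves_def)
  have "cT T {a, b} = lca T {a, b}" by (rule cT_lca[OF bt]) (use nontriv2 K2 in auto)
  also have "\<dots> = {a, b}" using K2 by (auto simp: T_def)
  finally have c: "cT T {a, b} = {a, b}" .
  define C where "C = {a, b}"
  have r: "(adj {C} (rcg_ends T T))\<^sup>*\<^sup>* (Inl C) (Inr C)"
    by (rule reach_step[of C]) (simp_all add: rcg_ends_def c C_def)
  have "Inv {Inl C, Inr C} {C} (rcg_ends T T)"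
    unfolding Inv_def conn_adj using r reach_sym[OF r] by (auto simp: rcg_ends_def c C_def)
  then have "Inv (rcg_vertices T T) {{a, b}} (rcg_ends T T)"
    unfolding rcg_vertices_def cl C_def by (simp add: insert_commute)
  then show ?case using bt by blast
next
  case (move1 V E v i j)
  obtain T1 T2 where bt1: "binary_tree_on V T1" and bt2: "binary_tree_on V T2"
    and inv: "Inv (rcg_vertices T1 T2) E (rcg_ends T1 T2)" using move1.IH by blast
  have sE: "simpleE V E" using hb_basic[OF move1.hyps(1)] by blast
  define h where "h = map_sum (fx i v) (fx j v)"
  define ends' where "ends' = rcg_ends (ins i v T1) (ins j v T2)"
  define W where "W = rcg_vertices T1 T2"
  note sr = step_relabel[OF bt1 bt2 inv sE move1.hyps(3,4,2), folded h_def ends'_def W_def]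
  have E1: "ends' {v, i} = (Inl {i, v}, h (Inr (cT T2 {j, i})))"
    unfolding ends'_def rcg_ends_def h_def
    using cT_ins_new[OF bt1 move1.hyps(3,2,3)] cT_ins_new[OF bt2 move1.hyps(4,2,3)] move1.hyps(5) by simp
  have E2: "ends' {v, j} = (h (Inl (cT T1 {i, j})), Inr {j, v})"
    unfolding ends'_def rcg_ends_def h_def
    using cT_ins_new[OF bt1 move1.hyps(3,2,4)] cT_ins_new[OF bt2 move1.hyps(4,2,4)] move1.hyps(5) by simp
  have U1: "h (Inr (cT T2 {j, i})) \<in> h ` W" unfolding W_def
    using vert2[OF bt2 move1.hyps(4,3)] move1.hyps(5) by auto
  have U2: "h (Inl (cT T1 {i, j})) \<in> h ` W" unfolding W_def
    using vert1[OF bt1 move1.hyps(3,4,5)] by auto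
  have f1: "{v, j} \<notin> E" "{v, i} \<notin> E" using fresh_edge[OF sE move1.hyps(2)] by auto
  have f2: "{v, i} \<noteq> {v, j}" using move1.hyps(5) by (simp add: doubleton_eq_iff)
  have i1: "Inv (insert (Inr {j, v}) (h ` W)) (insert {v, j} E) ends'"
    by (rule Inv_leaf[OF sr(1) sr(4) f1(1) U2]) (simp add: E2)
  have i2: "Inv (insert (Inl {i, v}) (insert (Inr {j, v}) (h ` W))) (insert {v, i} (insert {v, j} E)) ends'"
    by (rule Inv_leaf[OF i1, of "Inl {i, v}" "{v, i}" "h (Inr (cT T2 {j, i}))"]) (use sr(3) f1 f2 U1 E1 in auto)
  have "E \<union> {{v, i}, {v, j}} = insert {v, i} (insert {v, j} E)" by auto
  then have "Inv (rcg_vertices (ins i v T1) (ins j v T2)) (E \<union> {{v, i}, {v, j}}) (rcg_ends (ins i v T1) (ins j v T2))"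
    using i2 sr(2) unfolding ends'_def by simp
  moreover have "binary_tree_on (insert v V) (ins i v T1)" by (rule bt_ins[OF bt1 move1.hyps(3,2)])
  moreover have "binary_tree_on (insert v V) (ins j v T2)" by (rule bt_ins[OF bt2 move1.hyps(4,2)])
  ultimately show ?case by blast
next
  case (move2 V E v i j k)
  obtain T1 T2 where bt1: "binary_tree_on V T1" and bt2: "binary_tree_on V T2"
    and inv: "Inv (rcg_vertices T1 T2) E (rcg_ends T1 T2)" using move2.IH by blast
  have sE: "simpleE V E" using hb_basic[OF move2.hyps(1)] by blast
  have iV: "i \<in> V" and jV: "j \<in> V" using sE move2.hyps(3) unfolding simpleE_def
    by (metis doubleton_eq_iff)+
  note kV = move2.hyps(5) and vV = move2.hyps(2) and e0 = move2.hyps(3)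
  have ij: "i \<noteq> j" "j \<noteq> i" and ik: "i \<noteq> k" "k \<noteq> i" and jk: "j \<noteq> k" "k \<noteq> j"
    using move2.hyps(4,6,7) by auto
  have fr: "{v, i} \<notin> E" "{v, j} \<notin> E" "{v, k} \<notin> E" using fresh_edge[OF sE vV] by auto
  have dif: "{v, i} \<noteq> {v, j}" "{v, i} \<noteq> {v, k}" "{v, j} \<noteq> {v, k}"
    "{v, j} \<noteq> {v, i}" "{v, k} \<noteq> {v, i}" "{v, k} \<noteq> {v, j}"
    using ij ik jk by (simp_all add: doubleton_eq_iff)
  define J where "J = E - {{i, j}}"
  define ends where "ends = rcg_ends T1 T2"
  define W where "W = rcg_vertices T1 T2"
  define P :: "nat set + nat set" where "P = Inl (cT T1 {i, j})"
  define Q :: "nat set + nat set" where "Q = Inr (cT T2 {i, j})"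
  define X0 :: "nat set + nat set" where "X0 = Inl (cT T1 {i, k})"
  define Y0 :: "nat set + nat set" where "Y0 = Inr (cT T2 {j, k})"
  have PQ: "ends {i, j} = (P, Q)" unfolding ends_def rcg_ends_def P_def Q_def by simp
  have PW: "P \<in> W" unfolding P_def W_def by (rule vert1[OF bt1 iV jV ij(1)])
  have QW: "Q \<in> W" unfolding Q_def W_def by (rule vert2[OF bt2 iV jV ij(1)])
  have XW: "X0 \<in> W" unfolding X0_def W_def by (rule vert1[OF bt1 iV kV ik(1)])
  have YW: "Y0 \<in> W" unfolding Y0_def W_def by (rule vert2[OF bt2 jV kV jk(1)])
  have dX: "(adj J ends)\<^sup>*\<^sup>* P X0 \<or> (adj J ends)\<^sup>*\<^sup>* Q X0"
    unfolding J_def by (rule Inv_dich[OF inv[folded ends_def W_def] e0 PQ XW])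
  have dY: "(adj J ends)\<^sup>*\<^sup>* P Y0 \<or> (adj J ends)\<^sup>*\<^sup>* Q Y0"
    unfolding J_def by (rule Inv_dich[OF inv[folded ends_def W_def] e0 PQ YW])
  have fsP: "fst (rcg_ends T1 T2 {i, j}) = P" "snd (rcg_ends T1 T2 {i, j}) = Q"
    using PQ unfolding ends_def by auto
  have fin: "\<And>a b. a \<in> V \<Longrightarrow> b \<in> V \<Longrightarrow>
     Inv (rcg_vertices (ins a v T1) (ins b v T2)) ((E - {{i, j}}) \<union> {{v, i}, {v, j}, {v, k}}) (rcg_ends (ins a v T1) (ins b v T2))
     \<Longrightarrow> ?case"
  proof -
    fix a b assume a: "a \<in> V" and b: "b \<in> V" and I: "Inv (rcg_vertices (ins a v T1) (ins b v T2)) ((E - {{i, j}}) \<union> {{v, i}, {v, j}, {v, k}}) (rcg_ends (ins a v T1) (ins b v T2))"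
    have "binary_tree_on (insert v V) (ins a v T1)" by (rule bt_ins[OF bt1 a vV])
    moreover have "binary_tree_on (insert v V) (ins b v T2)" by (rule bt_ins[OF bt2 b vV])
    ultimately show "?case" using I by (intro exI[of _ "ins a v T1"] exI[of _ "ins b v T2"] conjI)
  qed
  show ?case
  proof (cases "(adj J ends)\<^sup>*\<^sup>* P X0")
    case True
    have c1: "cT (ins k v T1) {v, i} = fx k v (cT T1 {i, k})" "cT (ins j v T2) {v, i} = fx j v (cT T2 {i, j})"
      "cT (ins k v T1) {v, k} = {k, v}" "cT (ins j v T2) {v, k} = fx j v (cT T2 {j, k})"
      "cT (ins k v T1) {v, j} = fx k v (cT T1 {k, j})" "cT (ins j v T2) {v, j} = {j, v}"
      using cT_ins_new[OF bt1 kV vV iV] cT_ins_new[OF bt2 jV vV iV]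
        cT_ins_new[OF bt1 kV vV kV] cT_ins_new[OF bt2 jV vV kV]
        cT_ins_new[OF bt1 kV vV jV] cT_ins_new[OF bt2 jV vV jV] ij ik jk
      by (simp_all add: insert_commute)
    have I: "Inv (rcg_vertices (ins k v T1) (ins j v T2)) (insert {v, k} (insert {v, j} (insert {v, i} (E - {{i, j}}))))
            (rcg_ends (ins k v T1) (ins j v T2))"
    proof (rule move2_generic[OF bt1 bt2 inv sE kV jV vV e0 fr(1) fr(3) fr(2) dif(2) dif(1) dif(6)
          XW[unfolded W_def] QW[unfolded W_def] _ _ _ _ _ _])
      show "Inr (cT T2 {j, k}) \<in> rcg_vertices T1 T2" by (rule vert2[OF bt2 jV kV jk(1)])
      show "Inl (cT T1 {k, j}) \<in> rcg_vertices T1 T2" by (rule vert1[OF bt1 kV jV jk(2)])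
      show "rcg_ends (ins k v T1) (ins j v T2) {v, i} = (map_sum (fx k v) (fx j v) X0, map_sum (fx k v) (fx j v) Q)"
        unfolding rcg_ends_def X0_def Q_def using c1 by simp
      show "rcg_ends (ins k v T1) (ins j v T2) {v, k} = (Inl {k, v}, map_sum (fx k v) (fx j v) (Inr (cT T2 {j, k})))"
        unfolding rcg_ends_def using c1 by simp
      show "rcg_ends (ins k v T1) (ins j v T2) {v, j} = (map_sum (fx k v) (fx j v) (Inl (cT T1 {k, j})), Inr {j, v})"
        unfolding rcg_ends_def using c1 by simp
      show "(adj (E - {{i, j}}) (rcg_ends T1 T2))\<^sup>*\<^sup>* (fst (rcg_ends T1 T2 {i, j})) X0 \<and>
            (adj (E - {{i, j}}) (rcg_ends T1 T2))\<^sup>*\<^sup>* (snd (rcg_ends T1 T2 {i, j})) Q \<or>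
            (adj (E - {{i, j}}) (rcg_ends T1 T2))\<^sup>*\<^sup>* (snd (rcg_ends T1 T2 {i, j})) X0 \<and>
            (adj (E - {{i, j}}) (rcg_ends T1 T2))\<^sup>*\<^sup>* (fst (rcg_ends T1 T2 {i, j})) Q"
        using True unfolding fsP J_def ends_def by simp
    qed
    have eq: "insert {v, k} (insert {v, j} (insert {v, i} (E - {{i, j}}))) = (E - {{i, j}}) \<union> {{v, i}, {v, j}, {v, k}}"
      by auto
    from I show ?thesis unfolding eq by (rule fin[OF kV jV])
  next
    case False
    then have QX: "(adj J ends)\<^sup>*\<^sup>* Q X0" using dX by blast
    show ?thesis
    proof (cases "(adj J ends)\<^sup>*\<^sup>* Q Y0")
      case True
      have c1: "cT (ins i v T1) {v, j} = fx i v (cT T1 {i, j})" "cT (ins k v T2) {v, j} = fx k v (cT T2 {j, k})"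
        "cT (ins i v T1) {v, i} = {i, v}" "cT (ins k v T2) {v, i} = fx k v (cT T2 {k, i})"
        "cT (ins i v T1) {v, k} = fx i v (cT T1 {i, k})" "cT (ins k v T2) {v, k} = {k, v}"
        using cT_ins_new[OF bt1 iV vV jV] cT_ins_new[OF bt2 kV vV jV]
          cT_ins_new[OF bt1 iV vV iV] cT_ins_new[OF bt2 kV vV iV]
          cT_ins_new[OF bt1 iV vV kV] cT_ins_new[OF bt2 kV vV kV] ij ik jk
        by (simp_all add: insert_commute)
      have I: "Inv (rcg_vertices (ins i v T1) (ins k v T2)) (insert {v, i} (insert {v, k} (insert {v, j} (E - {{i, j}}))))
              (rcg_ends (ins i v T1) (ins k v T2))"
      proof (rule move2_generic[OF bt1 bt2 inv sE iV kV vV e0 fr(2) fr(1) fr(3) dif(4) dif(3) dif(2)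
            PW[unfolded W_def] YW[unfolded W_def] _ _ _ _ _ _])
        show "Inr (cT T2 {k, i}) \<in> rcg_vertices T1 T2" by (rule vert2[OF bt2 kV iV ik(2)])
        show "Inl (cT T1 {i, k}) \<in> rcg_vertices T1 T2" by (rule vert1[OF bt1 iV kV ik(1)])
        show "rcg_ends (ins i v T1) (ins k v T2) {v, j} = (map_sum (fx i v) (fx k v) P, map_sum (fx i v) (fx k v) Y0)"
          unfolding rcg_ends_def P_def Y0_def using c1 by simp
        show "rcg_ends (ins i v T1) (ins k v T2) {v, i} = (Inl {i, v}, map_sum (fx i v) (fx k v) (Inr (cT T2 {k, i})))"
          unfolding rcg_ends_def using c1 by simp
        show "rcg_ends (ins i v T1) (ins k v T2) {v, k} = (map_sum (fx i v) (fx k v) (Inl (cT T1 {i, k})), Inr {k, v})"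
          unfolding rcg_ends_def using c1 by simp
        show "(adj (E - {{i, j}}) (rcg_ends T1 T2))\<^sup>*\<^sup>* (fst (rcg_ends T1 T2 {i, j})) P \<and>
              (adj (E - {{i, j}}) (rcg_ends T1 T2))\<^sup>*\<^sup>* (snd (rcg_ends T1 T2 {i, j})) Y0 \<or>
              (adj (E - {{i, j}}) (rcg_ends T1 T2))\<^sup>*\<^sup>* (snd (rcg_ends T1 T2 {i, j})) P \<and>
              (adj (E - {{i, j}}) (rcg_ends T1 T2))\<^sup>*\<^sup>* (fst (rcg_ends T1 T2 {i, j})) Y0"
          using True unfolding fsP J_def ends_def by simp
      qed
      have eq: "insert {v, i} (insert {v, k} (insert {v, j} (E - {{i, j}}))) = (E - {{i, j}}) \<union> {{v, i}, {v, j}, {v, k}}"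
        by auto
      from I show ?thesis unfolding eq by (rule fin[OF iV kV])
    next
      case False
      then have PY: "(adj J ends)\<^sup>*\<^sup>* P Y0" using dY by blast
      have c1: "cT (ins i v T1) {v, k} = fx i v (cT T1 {i, k})" "cT (ins j v T2) {v, k} = fx j v (cT T2 {j, k})"
        "cT (ins i v T1) {v, i} = {i, v}" "cT (ins j v T2) {v, i} = fx j v (cT T2 {j, i})"
        "cT (ins i v T1) {v, j} = fx i v (cT T1 {i, j})" "cT (ins j v T2) {v, j} = {j, v}"
        using cT_ins_new[OF bt1 iV vV kV] cT_ins_new[OF bt2 jV vV kV]
          cT_ins_new[OF bt1 iV vV iV] cT_ins_new[OF bt2 jV vV iV]
          cT_ins_new[OF bt1 iV vV jV] cT_ins_new[OF bt2 jV vV jV] ij ik jk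
        by (simp_all add: insert_commute)
      have I: "Inv (rcg_vertices (ins i v T1) (ins j v T2)) (insert {v, i} (insert {v, j} (insert {v, k} (E - {{i, j}}))))
              (rcg_ends (ins i v T1) (ins j v T2))"
      proof (rule move2_generic[OF bt1 bt2 inv sE iV jV vV e0 fr(3) fr(1) fr(2) dif(5) dif(6) dif(1)
            XW[unfolded W_def] YW[unfolded W_def] _ _ _ _ _ _])
        show "Inr (cT T2 {j, i}) \<in> rcg_vertices T1 T2" by (rule vert2[OF bt2 jV iV ij(2)])
        show "Inl (cT T1 {i, j}) \<in> rcg_vertices T1 T2" by (rule vert1[OF bt1 iV jV ij(1)])
        show "rcg_ends (ins i v T1) (ins j v T2) {v, k} = (map_sum (fx i v) (fx j v) X0, map_sum (fx i v) (fx j v) Y0)"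
          unfolding rcg_ends_def X0_def Y0_def using c1 by simp
        show "rcg_ends (ins i v T1) (ins j v T2) {v, i} = (Inl {i, v}, map_sum (fx i v) (fx j v) (Inr (cT T2 {j, i})))"
          unfolding rcg_ends_def using c1 by simp
        show "rcg_ends (ins i v T1) (ins j v T2) {v, j} = (map_sum (fx i v) (fx j v) (Inl (cT T1 {i, j})), Inr {j, v})"
          unfolding rcg_ends_def using c1 by simp
        show "(adj (E - {{i, j}}) (rcg_ends T1 T2))\<^sup>*\<^sup>* (fst (rcg_ends T1 T2 {i, j})) X0 \<and>
              (adj (E - {{i, j}}) (rcg_ends T1 T2))\<^sup>*\<^sup>* (snd (rcg_ends T1 T2 {i, j})) Y0 \<or>
              (adj (E - {{i, j}}) (rcg_ends T1 T2))\<^sup>*\<^sup>* (snd (rcg_ends T1 T2 {i, j})) X0 \<and>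
              (adj (E - {{i, j}}) (rcg_ends T1 T2))\<^sup>*\<^sup>* (fst (rcg_ends T1 T2 {i, j})) Y0"
          using QX PY unfolding fsP J_def ends_def by simp
      qed
      have eq: "insert {v, i} (insert {v, j} (insert {v, k} (E - {{i, j}}))) = (E - {{i, j}}) \<union> {{v, i}, {v, j}, {v, k}}"
        by auto
      from I show ?thesis unfolding eq by (rule fin[OF iV jV])
    qed
  qed
qed


theorem lemma4p6:
  fixes n :: nat and E :: "nat set set"
  assumes "n \<ge> 2"
    and "simple_graph {1..n} E"
    and "henneberg {1..n} E"
  shows "\<exists>T1 T2. binary_tree_on {1..n} T1 \<and> binary_tree_on {1..n} T2 \<and>
                  restricted_clade_graph_is_tree E T1 T2"
proof -
  obtain T1 T2 where "binary_tree_on {1..n} T1" "binary_tree_on {1..n} T2"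
    "Inv (rcg_vertices T1 T2) E (rcg_ends T1 T2)" using main[OF assms(3)] by blast
  then show ?thesis unfolding restricted_clade_graph_is_tree_def using Inv_tree by blast
qed

end
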